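(* Let $\lambda>0$, $\ell>0$ and $\gamma\in A_\ell$. Assume there is a family $\{\gamma_q\}_{q\in(0,1)}\subset A_\ell$ and $q_0\in(0,1)$ with $\gamma_{q_0}=\gamma$ such that $\frac{d}{dq}\mathcal{E}_\lambda[\gamma_q]\big|_{q=q_0}=0$, $\frac{d^2}{dq^2}\mathcal{E}_\lambda[\gamma_q]\big|_{q=q_0}>0$, and: (i) the map $(0,1)\ni q\mapsto L[\gamma_q]\in(\ell,\infty)$ is continuous and bijective; (ii) for each $q\in(0,1)$, $\gamma_q$ is a global minimizer of $B$ in $\{\eta\in W^{2,2}_{\rm imm}(0,1;\mathbb{R}^2):\eta(0)=(0,0),\ \eta(1)=(\ell,0),\ L[\eta]=L[\gamma_q]\}$. Then $\gamma$ is a stable penalized pinned elastica, i.e. a local minimizer of $\mathcal{E}_\lambda$ in $A_\ell$.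
   Context: $W^{2,2}_{\rm imm}(0,1;\mathbb{R}^2)=\{\gamma\in W^{2,2}(0,1;\mathbb{R}^2): |\gamma'(x)|\neq0\ \forall x\in[0,1]\}$, $A_\ell=\{\gamma\in W^{2,2}_{\rm imm}(0,1;\mathbb{R}^2):\gamma(0)=(0,0),\ \gamma(1)=(\ell,0)\}$. $B[\gamma]=\int_\gamma k^2\,ds$ ($k$ signed curvature, $s$ arclength), $L[\gamma]$ is length, $\mathcal{E}_\lambda=B+\lambda L$. A local minimizer of $\mathcal{E}_\lambda$ in $A_\ell$ is $\gamma\in A_\ell$ such that for some $\delta>0$, $\mathcal{E}_\lambda[\gamma]\le\mathcal{E}_\lambda[\Gamma]$ for all $\Gamma\in A_\ell$ with $\|\Gamma-\gamma\|_{W^{2,2}}<\delta$. *)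

theory Defs
  imports "HOL-Analysis.Analysis"
begin

text \<open>Curves are maps real => real x real (R^2); only their values on [0,1] matter.
  W^{2,2}(0,1;R^2) is represented through the absolutely continuous representative:
  gamma is differentiable on [0,1] with derivative d1, and d1 is the indefinite
  integral of some d2 which is integrable and square integrable on [0,1].\<close>

type_synonym curve = "real \<Rightarrow> real \<times> real"

definition W22_rep :: "curve \<Rightarrow> curve \<Rightarrow> curve \<Rightarrow> bool" where
  "W22_rep \<gamma> d1 d2 \<longleftrightarrow>
     (\<forall>x\<in>{0..1}. (\<gamma> has_vector_derivative d1 x) (at x within {0..1})) \<and>
     d2 absolutely_integrable_on {0..1} \<and>
     (\<lambda>x. (norm (d2 x))\<^sup>2) integrable_on {0..1} \<and>
     (\<forall>x\<in>{0..1}. d1 x = d1 0 + integral {0..x} d2)"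

definition W22 :: "curve \<Rightarrow> bool" where
  "W22 \<gamma> \<longleftrightarrow> (\<exists>d1 d2. W22_rep \<gamma> d1 d2)"

definition wd1 :: "curve \<Rightarrow> curve" where
  "wd1 \<gamma> x = vector_derivative \<gamma> (at x within {0..1})"

definition wd2 :: "curve \<Rightarrow> curve" where
  "wd2 \<gamma> = (SOME d2. W22_rep \<gamma> (wd1 \<gamma>) d2)"

definition W22_imm :: "curve \<Rightarrow> bool" where
  "W22_imm \<gamma> \<longleftrightarrow> W22 \<gamma> \<and> (\<forall>x\<in>{0..1}. wd1 \<gamma> x \<noteq> 0)"

definition A_ell :: "real \<Rightarrow> curve set" where
  "A_ell l = {\<gamma>. W22_imm \<gamma> \<and> \<gamma> 0 = (0, 0) \<and> \<gamma> 1 = (l, 0)}"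

definition W22_norm :: "curve \<Rightarrow> real" where
  "W22_norm f = sqrt (integral {0..1} (\<lambda>x. (norm (f x))\<^sup>2)
                    + integral {0..1} (\<lambda>x. (norm (wd1 f x))\<^sup>2)
                    + integral {0..1} (\<lambda>x. (norm (wd2 f x))\<^sup>2))"

definition Len :: "curve \<Rightarrow> real" where
  "Len \<gamma> = integral {0..1} (\<lambda>x. norm (wd1 \<gamma> x))"

definition curv :: "curve \<Rightarrow> real \<Rightarrow> real" where
  "curv \<gamma> x = (fst (wd1 \<gamma> x) * snd (wd2 \<gamma> x) - snd (wd1 \<gamma> x) * fst (wd2 \<gamma> x))
                / (norm (wd1 \<gamma> x)) ^ 3"

text \<open>Bending energy  B = int k^2 ds = int_0^1 k^2 |gamma'| dx.\<close>
definition Bend :: "curve \<Rightarrow> real" where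
  "Bend \<gamma> = integral {0..1} (\<lambda>x. (curv \<gamma> x)\<^sup>2 * norm (wd1 \<gamma> x))"

definition Elam :: "real \<Rightarrow> curve \<Rightarrow> real" where
  "Elam lam \<gamma> = Bend \<gamma> + lam * Len \<gamma>"

definition local_min_E :: "real \<Rightarrow> real \<Rightarrow> curve \<Rightarrow> bool" where
  "local_min_E lam l \<gamma> \<longleftrightarrow> \<gamma> \<in> A_ell l \<and>
     (\<exists>\<delta>>0. \<forall>\<Gamma>\<in>A_ell l. W22_norm (\<lambda>x. \<Gamma> x - \<gamma> x) < \<delta> \<longrightarrow> Elam lam \<gamma> \<le> Elam lam \<Gamma>)"

end

theory Submission imports Defs begin

lemma hvd_cong:
  assumes "\<forall>x\<in>{0..1}. f x = g x" "x \<in> {0..1::real}"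
  shows "(f has_vector_derivative v) (at x within {0..1}) \<longleftrightarrow> (g has_vector_derivative v) (at x within {0..1})"
proof
  assume "(f has_vector_derivative v) (at x within {0..1})"
  then show "(g has_vector_derivative v) (at x within {0..1})"
    by (rule has_vector_derivative_transform_within[where d=1]) (use assms in auto)
next
  assume "(g has_vector_derivative v) (at x within {0..1})"
  then show "(f has_vector_derivative v) (at x within {0..1})"
    by (rule has_vector_derivative_transform_within[where d=1]) (use assms in auto)
qed

lemma wd1_cong:
  assumes "\<forall>x\<in>{0..1}. f x = g x" "x \<in> {0..1::real}"
  shows "wd1 f x = wd1 g x"
  unfolding wd1_def vector_derivative_def using hvd_cong[OF assms] by simp

lemma wd2_cong:
  assumes "\<forall>x\<in>{0..1}. f x = g x"
  shows "wd2 f = wd2 g"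
proof -
  have "\<And>d2. W22_rep f (wd1 f) d2 = W22_rep g (wd1 g) d2"
    unfolding W22_rep_def using wd1_cong[OF assms] hvd_cong[OF assms]
    by (metis atLeastAtMost_iff order_refl zero_le_one)
  then have "W22_rep f (wd1 f) = W22_rep g (wd1 g)" by (rule ext)
  then show ?thesis unfolding wd2_def by simp
qed

lemma Elam_cong:
  assumes "\<forall>x\<in>{0..1}. f x = g x"
  shows "Elam lam f = Elam lam g" "Len f = Len g"
proof -
  have c: "curv f x = curv g x" if "x \<in> {0..1}" for x
    unfolding curv_def using wd1_cong[OF assms that] wd2_cong[OF assms] by simp
  have "Len f = Len g" unfolding Len_def
    by (rule integral_cong) (use wd1_cong[OF assms] in simp)
  moreover have "Bend f = Bend g" unfolding Bend_def
    by (rule integral_cong) (use wd1_cong[OF assms] c in simp)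
  ultimately show "Elam lam f = Elam lam g" "Len f = Len g" unfolding Elam_def by simp_all
qed

lemma W22_wd1:
  assumes "W22 g"
  shows "continuous_on {0..1} (wd1 g)"
    "\<forall>x\<in>{0..1}. (g has_vector_derivative wd1 g x) (at x within {0..1})"
proof -
  obtain d1 d2 where r: "W22_rep g d1 d2" using assms unfolding W22_def by blast
  have hd: "\<forall>x\<in>{0..1}. (g has_vector_derivative d1 x) (at x within {0..1})"
    and ai: "d2 absolutely_integrable_on {0..1}"
    and di: "\<forall>x\<in>{0..1}. d1 x = d1 0 + integral {0..x} d2"
    using r unfolding W22_rep_def by blast+
  have w: "wd1 g x = d1 x" if "x \<in> {0..1}" for x
    unfolding wd1_def using vector_derivative_within_closed_interval[of 0 1 x g "d1 x"] hd that by simp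
  have "d2 integrable_on {0..1}" using ai by (simp add: absolutely_integrable_on_def)
  then have "continuous_on {0..1} (\<lambda>x. d1 0 + integral {0..x} d2)"
    by (intro continuous_intros indefinite_integral_continuous_1)
  moreover have "\<And>x. x \<in> {0..1} \<Longrightarrow> d1 0 + integral {0..x} d2 = d1 x"
    using di by metis
  ultimately have "continuous_on {0..1} d1"
    using continuous_on_cong[of "{0..1}" "{0..1}" "\<lambda>x. d1 0 + integral {0..x} d2" d1] by blast
  then show "continuous_on {0..1} (wd1 g)"
    using continuous_on_cong[of "{0..1}" "{0..1}" d1 "wd1 g"] w by metis
  show "\<forall>x\<in>{0..1}. (g has_vector_derivative wd1 g x) (at x within {0..1})"
    using hd w by simp
qed

lemma int_nonneg': 
  assumes "\<And>x. x \<in> S \<Longrightarrow> 0 \<le> (f x::real)"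
  shows "0 \<le> integral S f"
  by (metis assms integral_nonneg not_integrable_integral order_refl)

lemma Len_close:
  assumes G: "W22 \<Gamma>" and g: "W22 \<gamma>" and e: "e > 0"
    and n: "W22_norm (\<lambda>x. \<Gamma> x - \<gamma> x) < e"
  shows "\<bar>Len \<Gamma> - Len \<gamma>\<bar> < e"
proof -
  define h where "h = (\<lambda>x. \<Gamma> x - \<gamma> x)"
  have cG: "continuous_on {0..1} (wd1 \<Gamma>)" and dG: "\<forall>x\<in>{0..1}. (\<Gamma> has_vector_derivative wd1 \<Gamma> x) (at x within {0..1})"
    using W22_wd1[OF G] by auto
  have cg: "continuous_on {0..1} (wd1 \<gamma>)" and dg: "\<forall>x\<in>{0..1}. (\<gamma> has_vector_derivative wd1 \<gamma> x) (at x within {0..1})"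
    using W22_wd1[OF g] by auto
  have wh: "wd1 h x = wd1 \<Gamma> x - wd1 \<gamma> x" if "x \<in> {0..1}" for x
  proof -
    have "(h has_vector_derivative wd1 \<Gamma> x - wd1 \<gamma> x) (at x within {0..1})"
      unfolding h_def using dG dg that by (intro has_vector_derivative_diff) auto
    then show ?thesis unfolding wd1_def
      using vector_derivative_within_closed_interval[of 0 1 x h] that by simp
  qed
  define A where "A = integral {0..1} (\<lambda>x. (norm (h x))\<^sup>2)"
  define B where "B = integral {0..1} (\<lambda>x. (norm (wd1 h x))\<^sup>2)"
  define C where "C = integral {0..1} (\<lambda>x. (norm (wd2 h x))\<^sup>2)"
  have A0: "A \<ge> 0" unfolding A_def by (rule int_nonneg') simp
  have C0: "C \<ge> 0" unfolding C_def by (rule int_nonneg') simp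
  have "sqrt (A + B + C) < e" using n unfolding W22_norm_def h_def A_def B_def C_def by simp
  then have "A + B + C < e\<^sup>2"
  proof (cases "A + B + C < 0")
    case False
    then have "A + B + C = (sqrt (A + B + C))\<^sup>2" by simp
    also have "\<dots> < e\<^sup>2" using \<open>sqrt (A + B + C) < e\<close> False
      by (intro power_strict_mono) auto
    finally show ?thesis .
  next
    case True
    have "0 < e\<^sup>2" using e by simp
    then show ?thesis using True by linarith
  qed
  then have Bl: "B < e\<^sup>2" using A0 C0 by linarith
  have ch: "continuous_on {0..1} (wd1 h)"
    using continuous_on_cong[of "{0..1}" "{0..1}" "\<lambda>x. wd1 \<Gamma> x - wd1 \<gamma> x" "wd1 h"] wh
      continuous_on_diff[OF cG cg] by metis
  have iG: "(\<lambda>x. norm (wd1 \<Gamma> x)) integrable_on {0..1}"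
    by (rule integrable_continuous_interval, intro continuous_intros cG)
  have ig: "(\<lambda>x. norm (wd1 \<gamma> x)) integrable_on {0..1}"
    by (rule integrable_continuous_interval, intro continuous_intros cg)
  have ih: "(\<lambda>x. norm (wd1 h x)) integrable_on {0..1}"
    by (rule integrable_continuous_interval, intro continuous_intros ch)
  have ih2: "(\<lambda>x. (norm (wd1 h x))\<^sup>2) integrable_on {0..1}"
    by (rule integrable_continuous_interval, intro continuous_intros ch)
  have ih3: "(\<lambda>x. e/2 + (norm (wd1 h x))\<^sup>2 / (2*e)) integrable_on {0..1}"
    by (rule integrable_continuous_interval, intro continuous_intros ch) (use e in auto)
  have pt: "t \<le> e/2 + t\<^sup>2 / (2*e)" for t :: real
  proof -
    have "0 \<le> (t - e)\<^sup>2" by simp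
    then have "2*e*t \<le> e\<^sup>2 + t\<^sup>2" by (simp add: power2_eq_square algebra_simps)
    then show ?thesis using e by (simp add: field_simps power2_eq_square)
  qed
  have "integral {0..1} (\<lambda>x. norm (wd1 h x)) \<le> integral {0..1} (\<lambda>x. e/2 + (norm (wd1 h x))\<^sup>2 / (2*e))"
    by (rule integral_le[OF ih ih3]) (rule pt)
  also have "\<dots> = e/2 + B/(2*e)"
  proof -
    have i4: "(\<lambda>x. (norm (wd1 h x))\<^sup>2 / (2*e)) integrable_on {0..1}"
      using ih2 integrable_on_cdivide_iff[of "2*e" "\<lambda>x. (norm (wd1 h x))\<^sup>2" "{0..1}"] e by simp
    have ic: "(\<lambda>x. e/2) integrable_on {0..1::real}" by (rule integrable_const_ivl)
    have "integral {0..1} (\<lambda>x. e/2 + (norm (wd1 h x))\<^sup>2 / (2*e))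
        = integral {0..1} (\<lambda>x::real. e/2) + integral {0..1} (\<lambda>x. (norm (wd1 h x))\<^sup>2 / (2*e))"
      by (rule integral_add[OF ic i4])
    also have "\<dots> = e/2 + B/(2*e)" unfolding B_def by simp
    finally show ?thesis .
  qed
  also have "\<dots> < e/2 + e\<^sup>2/(2*e)" using Bl e by (simp add: divide_strict_right_mono)
  also have "\<dots> = e" using e by (simp add: power2_eq_square)
  finally have I: "integral {0..1} (\<lambda>x. norm (wd1 h x)) < e" .
  have "Len \<Gamma> - Len \<gamma> = integral {0..1} (\<lambda>x. norm (wd1 \<Gamma> x) - norm (wd1 \<gamma> x))"
    unfolding Len_def using iG ig by (simp add: integral_diff)
  also have "\<dots> \<le> integral {0..1} (\<lambda>x. norm (wd1 h x))"
    by (rule integral_le) (use iG ig ih wh in \<open>auto intro: integrable_diff simp: norm_triangle_ineq2\<close>)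
  finally have 1: "Len \<Gamma> - Len \<gamma> \<le> integral {0..1} (\<lambda>x. norm (wd1 h x))" .
  have "Len \<gamma> - Len \<Gamma> = integral {0..1} (\<lambda>x. norm (wd1 \<gamma> x) - norm (wd1 \<Gamma> x))"
    unfolding Len_def using iG ig by (simp add: integral_diff)
  also have "\<dots> \<le> integral {0..1} (\<lambda>x. norm (wd1 h x))"
    by (rule integral_le) (use iG ig ih wh in \<open>auto intro: integrable_diff simp: norm_minus_commute[of "wd1 \<Gamma> _"] norm_triangle_ineq2\<close>)
  finally have 2: "Len \<gamma> - Len \<Gamma> \<le> integral {0..1} (\<lambda>x. norm (wd1 h x))" .
  show ?thesis using 1 2 I by linarith
qed

lemma local_min_1d:
  fixes f e' :: "real \<Rightarrow> real"
  assumes r: "r > 0" and d: "\<And>q. dist q q0 < r \<Longrightarrow> (f has_real_derivative e' q) (at q)"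
    and z: "e' q0 = 0" and c: "(e' has_real_derivative c) (at q0)" "c > 0"
  shows "\<exists>s>0. \<forall>q. dist q q0 < s \<longrightarrow> f q0 \<le> f q"
proof -
  obtain d1 where d1: "d1 > 0" "\<And>h. h > 0 \<Longrightarrow> h < d1 \<Longrightarrow> e' q0 < e' (q0 + h)"
    using DERIV_pos_inc_right[OF c] by blast
  obtain d2 where d2: "d2 > 0" "\<And>h. h > 0 \<Longrightarrow> h < d2 \<Longrightarrow> e' (q0 - h) < e' q0"
    using DERIV_pos_inc_left[OF c] by blast
  define s where "s = min r (min d1 d2)"
  have s: "s > 0" using r d1 d2 by (simp add: s_def)
  have cont: "continuous_on {a..b} f" if "\<And>x. x \<in> {a..b} \<Longrightarrow> dist x q0 < r" for a b
    using d that by (meson DERIV_continuous continuous_at_imp_continuous_on)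
  have "f q0 \<le> f q" if q: "dist q q0 < s" for q
  proof (cases "q0 \<le> q")
    case True
    have "f q0 \<le> f q"
    proof (rule DERIV_nonneg_imp_increasing_open[OF True])
      fix x assume x: "q0 < x" "x < q"
      have "e' q0 < e' (q0 + (x - q0))" using x q d1 by (intro d1(2)) (auto simp: s_def dist_real_def)
      then show "\<exists>y. (f has_real_derivative y) (at x) \<and> 0 \<le> y"
        using d[of x] x q z by (intro exI[of _ "e' x"]) (auto simp: s_def dist_real_def)
    next
      show "continuous_on {q0..q} f" using q by (intro cont) (auto simp: s_def dist_real_def)
    qed
    then show ?thesis .
  next
    case False
    then have F: "q \<le> q0" by simp
    have "f q0 \<le> f q"
    proof (rule DERIV_nonpos_imp_decreasing_open[OF F])
      fix x assume x: "q < x" "x < q0"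
      have "e' (q0 - (q0 - x)) < e' q0" using x q d2 by (intro d2(2)) (auto simp: s_def dist_real_def)
      then show "\<exists>y. (f has_real_derivative y) (at x) \<and> y \<le> 0"
        using d[of x] x q z by (intro exI[of _ "e' x"]) (auto simp: s_def dist_real_def)
    next
      show "continuous_on {q..q0} f" using q by (intro cont) (auto simp: s_def dist_real_def)
    qed
    then show ?thesis .
  qed
  then show ?thesis using s by blast
qed

theorem lemma3p1:
  fixes lam l q0 :: real and \<gamma> :: curve and \<gamma>q :: "real \<Rightarrow> curve"
  assumes "lam > 0" and "l > 0" and "\<gamma> \<in> A_ell l"
    and fam: "\<forall>q\<in>{0<..<1}. \<gamma>q q \<in> A_ell l"
    and q0: "q0 \<in> {0<..<1}" and eq: "\<forall>x\<in>{0..1}. \<gamma>q q0 x = \<gamma> x"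
    and deriv: "\<exists>e'. (\<forall>\<^sub>F q in nhds q0. ((\<lambda>p. Elam lam (\<gamma>q p)) has_real_derivative e' q) (at q))
                  \<and> e' q0 = 0 \<and> (\<exists>c>0. (e' has_real_derivative c) (at q0))"
    and cont: "continuous_on {0<..<1} (\<lambda>q. Len (\<gamma>q q))"
    and bij: "bij_betw (\<lambda>q. Len (\<gamma>q q)) {0<..<1} {l<..}"
    and minB: "\<forall>q\<in>{0<..<1}. \<forall>\<eta>. W22_imm \<eta> \<and> \<eta> 0 = (0, 0) \<and> \<eta> 1 = (l, 0)
                  \<and> Len \<eta> = Len (\<gamma>q q) \<longrightarrow> Bend (\<gamma>q q) \<le> Bend \<eta>"
  shows "local_min_E lam l \<gamma>"
proof -
  let ?L = "\<lambda>q. Len (\<gamma>q q)"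
  let ?f = "\<lambda>q. Elam lam (\<gamma>q q)"
  obtain e' where e1: "\<forall>\<^sub>F q in nhds q0. (?f has_real_derivative e' q) (at q)"
    and e2: "e' q0 = 0" and e3: "\<exists>c>0. (e' has_real_derivative c) (at q0)"
    using deriv by blast
  obtain c where c: "c > 0" "(e' has_real_derivative c) (at q0)" using e3 by blast
  obtain r where r: "r > 0" "\<And>q. dist q q0 < r \<Longrightarrow> (?f has_real_derivative e' q) (at q)"
    using e1 unfolding eventually_nhds_metric by blast
  obtain s where s: "s > 0" "\<And>q. dist q q0 < s \<Longrightarrow> ?f q0 \<le> ?f q"
    using local_min_1d[OF r(1) r(2) e2 c(2) c(1)] by blast
  define t where "t = min s (min q0 (1 - q0)) / 2"
  have t: "t > 0" "t < s" "0 < q0 - t" "q0 + t < 1"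
    using s q0 by (auto simp: t_def min_def field_simps)
  define a where "a = q0 - t"
  define b where "b = q0 + t"
  have ab: "a < b" using t by (simp add: a_def b_def)
  have sub: "{a..b} \<subseteq> {0<..<1}" using t by (auto simp: a_def b_def)
  have cs: "closed_segment a b = {a..b}" using ab by (simp add: closed_segment_eq_real_ivl)
  have img: "?L ` open_segment a b = open_segment (?L a) (?L b)"
    apply (rule continuous_injective_image_open_segment_1)
    using cs sub continuous_on_subset[OF cont] inj_on_subset[OF bij_betw_imp_inj_on[OF bij]]
    by auto
  have os: "open_segment a b = {a<..<b}" using ab by (simp add: open_segment_eq_real_ivl)
  have q0ab: "q0 \<in> {a<..<b}" using t by (simp add: a_def b_def)
  have "open (open_segment (?L a) (?L b))" by (simp add: open_segment_eq_real_ivl)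
  moreover have "?L q0 \<in> open_segment (?L a) (?L b)" using img os q0ab by blast
  ultimately obtain e where e: "e > 0" "ball (?L q0) e \<subseteq> open_segment (?L a) (?L b)"
    using open_contains_ball by blast
  have gA: "\<gamma> \<in> A_ell l" by fact
  have Eg: "Elam lam \<gamma> = ?f q0" "Len \<gamma> = ?L q0"
    using Elam_cong[of "\<gamma>q q0" \<gamma>] eq by auto
  have "\<forall>\<Gamma>\<in>A_ell l. W22_norm (\<lambda>x. \<Gamma> x - \<gamma> x) < e \<longrightarrow> Elam lam \<gamma> \<le> Elam lam \<Gamma>"
  proof (intro ballI impI)
    fix \<Gamma> assume G: "\<Gamma> \<in> A_ell l" and n: "W22_norm (\<lambda>x. \<Gamma> x - \<gamma> x) < e"
    have GW: "W22 \<Gamma>" "W22_imm \<Gamma>" "\<Gamma> 0 = (0,0)" "\<Gamma> 1 = (l,0)"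
      using G by (auto simp: A_ell_def W22_imm_def)
    have gW: "W22 \<gamma>" using gA by (auto simp: A_ell_def W22_imm_def)
    have "\<bar>Len \<Gamma> - Len \<gamma>\<bar> < e" by (rule Len_close[OF GW(1) gW e(1) n])
    then have "Len \<Gamma> \<in> ball (?L q0) e" using Eg by (simp add: dist_real_def abs_minus_commute)
    then have "Len \<Gamma> \<in> ?L ` {a<..<b}" using e img os by auto
    then obtain q where q: "q \<in> {a<..<b}" "?L q = Len \<Gamma>" by auto
    have q01: "q \<in> {0<..<1}" using q t by (auto simp: a_def b_def)
    have "dist q q0 < s" using q t by (auto simp: a_def b_def dist_real_def)
    then have "?f q0 \<le> ?f q" by (rule s(2))
    moreover have "Bend (\<gamma>q q) \<le> Bend \<Gamma>" using minB q01 GW q by auto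
    ultimately show "Elam lam \<gamma> \<le> Elam lam \<Gamma>"
      using Eg q by (simp add: Elam_def)
  qed
  then show ?thesis unfolding local_min_E_def using gA e(1) by blast
qed

end
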